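(* Let $\mathbf{S}$ be a $k$-safety hyperproperty over a finite alphabet $\Sigma$, let $\mathcal{O} = (S,E,\Delta)$ be an observation table for $\mathbf{S}$ over the alphabet $\Sigma^{k'}$ for some $k' \in \mathbb{N}$, and let $k'' > k'$. Let $\mathcal{O}' = (S',E',\Delta')$ be the observation table over $\Sigma^{k''}$ with $S' = \{\epsilon\} \cup \{\mathrm{extend}(s,k'') \mid s \in S\}$, $E' = \{\epsilon\} \cup \{\mathrm{extend}(e,k'') \mid e \in E\}$, and $\Delta'$ defined on $(S' \cup S'\cdot\Sigma^{k''})\cdot E'$ by membership (i.e., $\Delta'(w) = 1$ iff $\mathrm{unzip}(w) \in \mathrm{Bad}(\mathbf{S})$). Then $|\mathrm{row}(S)| = |\mathrm{row}(S')|$.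
   Context: For a finite set $T \subseteq \Sigma^*$ and $T' \subseteq \Sigma^\omega$, write $T \le T'$ if every $t \in T$ is a prefix of some $t' \in T'$. For a hyperproperty $\mathbf{S} \subseteq \mathcal{P}(\Sigma^\omega)$, $\mathrm{Bad}(\mathbf{S}) = \{T \subseteq \Sigma^* \text{ finite} \mid \forall T' \subseteq \Sigma^\omega.\ T \le T' \Rightarrow T' \notin \mathbf{S}\}$; $\mathbf{S}$ is $k$-safety if every $T' \notin \mathbf{S}$ has some $T \in \mathrm{Bad}(\mathbf{S})$ with $|T| \le k$ and $T \le T'$. For $\sigma = v_0 \cdots v_m \in (\Sigma^{n})^*$, $\mathrm{unzip}(\sigma)$ is the set of the $n$ component words $v_0[i]\cdots v_m[i]$. An observation table for $\mathbf{S}$ over $\Sigma^n$ is a triple $(S,E,\Delta)$ where $S \subseteq (\Sigma^n)^*$ is a nonempty finite prefix-closed set, $E \subseteq (\Sigma^n)^*$ is a nonempty finite suffix-closed set, and $\Delta : (S \cup S\cdot\Sigma^n)\cdot E \to \{0,1\}$ with $\Delta(w) = 1$ iff $\mathrm{unzip}(w) \in \mathrm{Bad}(\mathbf{S})$. For $s \in S \cup S\cdot \Sigma^n$, $\mathrm{row}(s): E \to \{0,1\}$ is $\mathrm{row}(s)(e) = \Delta(s\cdot e)$, and $\mathrm{row}(S) = \{\mathrm{row}(s) \mid s \in S\}$. For a letter $(a_1,\dots,a_{k'}) \in \Sigma^{k'}$ and $k'' > k'$, $\mathrm{extend}((a_1,\dots,a_{k'}),k'') = (a_1,\dots,a_{k'},a_{k'},\dots,a_{k'})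 \in \Sigma^{k''}$ (the last component repeated), extended letterwise to words. *)

theory Defs
  imports "HOL-Library.FuncSet"
begin

(* Infinite words over 'a are functions nat => 'a; finite words are lists.
   A letter of Sigma^n is an 'a list of length n; a word over Sigma^n is a list of such letters. *)

definition is_prefix_of :: "'a list \<Rightarrow> (nat \<Rightarrow> 'a) \<Rightarrow> bool" where
  "is_prefix_of t t' \<longleftrightarrow> (\<forall>i<length t. t ! i = t' i)"

definition trace_le :: "'a list set \<Rightarrow> (nat \<Rightarrow> 'a) set \<Rightarrow> bool" where
  "trace_le T T' \<longleftrightarrow> (\<forall>t\<in>T. \<exists>t'\<in>T'. is_prefix_of t t')"

definition Bad :: "(nat \<Rightarrow> 'a) set set \<Rightarrow> 'a list set set" where
  "Bad H = {T. finite T \<and> (\<forall>T'. trace_le T T' \<longrightarrow> T' \<notin> H)}"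

definition k_safety :: "(nat \<Rightarrow> 'a) set set \<Rightarrow> nat \<Rightarrow> bool" where
  "k_safety H k \<longleftrightarrow> (\<forall>T'. T' \<notin> H \<longrightarrow> (\<exists>T\<in>Bad H. card T \<le> k \<and> trace_le T T'))"

definition unzip :: "nat \<Rightarrow> 'a list list \<Rightarrow> 'a list set" where
  "unzip n \<sigma> = {map (\<lambda>v. v ! i) \<sigma> | i. i < n}"

definition extend_letter :: "nat \<Rightarrow> 'a list \<Rightarrow> 'a list" where
  "extend_letter k'' v = v @ replicate (k'' - length v) (last v)"

definition extend :: "nat \<Rightarrow> 'a list list \<Rightarrow> 'a list list" where
  "extend k'' w = map (extend_letter k'') w"

definition obs_table ::
  "(nat \<Rightarrow> 'a) set set \<Rightarrow> nat \<Rightarrow> 'a list list set \<Rightarrow> 'a list list set \<Rightarrow> ('a list list \<Rightarrow> bool) \<Rightarrow> bool" where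
  "obs_table H n S E \<Delta> \<longleftrightarrow>
     S \<subseteq> lists {v. length v = n} \<and> finite S \<and> S \<noteq> {} \<and> (\<forall>u v. u @ v \<in> S \<longrightarrow> u \<in> S) \<and>
     E \<subseteq> lists {v. length v = n} \<and> finite E \<and> E \<noteq> {} \<and> (\<forall>u v. u @ v \<in> E \<longrightarrow> v \<in> E) \<and>
     (\<forall>s \<in> S \<union> {s @ [a] | s a. s \<in> S \<and> length a = n}. \<forall>e\<in>E.
        \<Delta> (s @ e) = (unzip n (s @ e) \<in> Bad H))"

definition row :: "('a list list \<Rightarrow> bool) \<Rightarrow> 'a list list set \<Rightarrow> 'a list list \<Rightarrow> ('a list list \<Rightarrow> bool)" where
  "row \<Delta> E s = restrict (\<lambda>e. \<Delta> (s @ e)) E"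

definition rows :: "('a list list \<Rightarrow> bool) \<Rightarrow> 'a list list set \<Rightarrow> 'a list list set \<Rightarrow> ('a list list \<Rightarrow> bool) set" where
  "rows \<Delta> E S = row \<Delta> E ` S"

end

theory Submission
  imports Defs
begin

lemma card_kernel_eq:
  assumes "\<And>x y. x \<in> S \<Longrightarrow> y \<in> S \<Longrightarrow> f x = f y \<longleftrightarrow> g x = g y"
  shows "card (f ` S) = card (g ` S)"
proof -
  define h where "h = (\<lambda>r. g (inv_into S f r))"
  have 1: "h ` (f ` S) = g ` S"
  proof -
    have "h (f s) = g s" if "s \<in> S" for s
      using assms[of "inv_into S f (f s)" s] that inv_into_into[of "f s" f S] f_inv_into_f[of "f s" f S]
      unfolding h_def by auto
    then show ?thesis by (force simp: image_iff)
  qed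
  have 2: "inj_on h (f ` S)"
  proof (rule inj_onI)
    fix a b assume "a \<in> f ` S" "b \<in> f ` S" "h a = h b"
    then show "a = b"
      using assms[of "inv_into S f a" "inv_into S f b"]
      by (auto simp: h_def inv_into_into f_inv_into_f)
  qed
  show ?thesis using card_image[OF 2] 1 by simp
qed

lemma extend_letter_nth:
  assumes "length v = k'" "0 < k'" "k' < k''" "i < k''"
  shows "extend_letter k'' v ! i = v ! (min i (k' - 1))"
proof (cases "i < k'")
  case True then show ?thesis using assms by (auto simp: extend_letter_def nth_append)
next
  case False
  then have "min i (k' - 1) = length v - 1" using assms by simp
  moreover have "v \<noteq> []" using assms by auto
  ultimately show ?thesis using False assms by (simp add: extend_letter_def nth_append last_conv_nth)
qed

lemma unzip_extend:
  assumes "w \<in> lists {v. length v = k'}" "0 < k'" "k' < k''"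
  shows "unzip k'' (extend k'' w) = unzip k' w"
proof -
  have eq: "map (\<lambda>v. v ! i) (extend k'' w) = map (\<lambda>v. v ! (min i (k' - 1))) w" if "i < k''" for i
    using assms that by (auto simp: extend_def extend_letter_nth)
  have "unzip k'' (extend k'' w) = {map (\<lambda>v. v ! (min i (k' - 1))) w | i. i < k''}"
    unfolding unzip_def
  proof (intro set_eqI iffI)
    fix x assume "x \<in> {map (\<lambda>v. v ! i) (extend k'' w) | i. i < k''}"
    then obtain i where "i < k''" "x = map (\<lambda>v. v ! i) (extend k'' w)" by blast
    then show "x \<in> {map (\<lambda>v. v ! (min i (k' - 1))) w | i. i < k''}"
    proof -
      have "x = map (\<lambda>v. v ! (min i (k' - 1))) w" using eq[of i] \<open>i < k''\<close> \<open>x = _\<close> by simp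
      then show ?thesis using \<open>i < k''\<close> by blast
    qed
  next
    fix x assume "x \<in> {map (\<lambda>v. v ! (min i (k' - 1))) w | i. i < k''}"
    then obtain i where "i < k''" "x = map (\<lambda>v. v ! (min i (k' - 1))) w" by blast
    then show "x \<in> {map (\<lambda>v. v ! i) (extend k'' w) | i. i < k''}" proof -
      have "x = map (\<lambda>v. v ! i) (extend k'' w)" using eq[of i] \<open>i < k''\<close> \<open>x = _\<close> by simp
      then show ?thesis using \<open>i < k''\<close> by blast
    qed
  qed
  also have "\<dots> = unzip k' w"
    unfolding unzip_def
  proof (intro set_eqI iffI)
    fix x assume "x \<in> {map (\<lambda>v. v ! (min i (k' - 1))) w | i. i < k''}"
    then obtain i where "i < k''" "x = map (\<lambda>v. v ! (min i (k' - 1))) w" by auto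
    then show "x \<in> {map (\<lambda>v. v ! i) w | i. i < k'}" using assms
      by (intro CollectI exI[of _ "min i (k' - 1)"]) auto
  next
    fix x assume "x \<in> {map (\<lambda>v. v ! i) w | i. i < k'}"
    then obtain i where "i < k'" "x = map (\<lambda>v. v ! i) w" by auto
    then show "x \<in> {map (\<lambda>v. v ! (min i (k' - 1))) w | i. i < k''}" using assms
      by (intro CollectI exI[of _ i]) auto
  qed
  finally show ?thesis .
qed

lemma restrict_eq_iff: "restrict f A = restrict g A \<longleftrightarrow> (\<forall>x\<in>A. f x = g x)"
proof
  assume h: "restrict f A = restrict g A"
  show "\<forall>x\<in>A. f x = g x"
  proof
    fix x assume "x \<in> A"
    then show "f x = g x" using fun_cong[OF h, of x] by simp
  qed
qed (auto intro: restrict_ext)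

lemma extend_append: "extend n (a @ b) = extend n a @ extend n b"
  by (simp add: extend_def)

theorem lemma6:
  fixes H :: "(nat \<Rightarrow> 'a::finite) set set"
    and k k' k'' :: nat
    and S E :: "'a list list set"
    and \<Delta> :: "'a list list \<Rightarrow> bool"
  assumes "k_safety H k"
    and "obs_table H k' S E \<Delta>"
    and "0 < k'"
    and "k' < k''"
  shows "card (rows \<Delta> E S) =
         card (rows (\<lambda>w. unzip k'' w \<in> Bad H)
                    (insert [] (extend k'' ` E)) (insert [] (extend k'' ` S)))"
proof -
  note ot = assms(2)[unfolded obs_table_def]
  have eS: "[] \<in> S" using ot by (metis all_not_in_conv append_Nil)
  have eE: "[] \<in> E" using ot by (metis all_not_in_conv append_Nil2)
  have exE: "extend k'' [] = []" by (simp add: extend_def)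
  have S': "insert [] (extend k'' ` S) = extend k'' ` S" proof -
    have "[] \<in> extend k'' ` S" using eS exE by (metis image_eqI)
    then show ?thesis by (rule insert_absorb)
  qed
  have E': "insert [] (extend k'' ` E) = extend k'' ` E" proof -
    have "[] \<in> extend k'' ` E" using eE exE by (metis image_eqI)
    then show ?thesis by (rule insert_absorb)
  qed
  define P where "P = (\<lambda>w. unzip k'' w \<in> Bad H)"
  have key: "P (extend k'' s @ extend k'' e) = \<Delta> (s @ e)" if "s \<in> S" "e \<in> E" for s e
  proof -
    have "s \<in> lists {v. length v = k'}" "e \<in> lists {v. length v = k'}" using conjunct1[OF ot] conjunct1[OF conjunct2[OF conjunct2[OF conjunct2[OF conjunct2[OF ot]]]]] that by (auto dest!: subsetD)
    then have "s @ e \<in> lists {v. length v = k'}" by simp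
    then have "P (extend k'' s @ extend k'' e) = (unzip k' (s @ e) \<in> Bad H)"
      unfolding P_def extend_append[symmetric] using unzip_extend assms(3,4) by metis
    also have "\<dots> = \<Delta> (s @ e)" using conjunct2[OF conjunct2[OF conjunct2[OF conjunct2[OF conjunct2[OF conjunct2[OF conjunct2[OF conjunct2[OF ot]]]]]]]] that by blast
    finally show ?thesis .
  qed
  have kern: "row \<Delta> E x = row \<Delta> E y \<longleftrightarrow>
      row P (extend k'' ` E) (extend k'' x) = row P (extend k'' ` E) (extend k'' y)"
    if "x \<in> S" "y \<in> S" for x y
  proof -
    have "row \<Delta> E x = row \<Delta> E y \<longleftrightarrow> (\<forall>e\<in>E. \<Delta> (x @ e) = \<Delta> (y @ e))"
      unfolding row_def by (rule restrict_eq_iff)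
    also have "\<dots> \<longleftrightarrow> (\<forall>e\<in>E. P (extend k'' x @ extend k'' e) = P (extend k'' y @ extend k'' e))"
      using key that by auto
    also have "\<dots> \<longleftrightarrow> (\<forall>e\<in>extend k'' ` E. P (extend k'' x @ e) = P (extend k'' y @ e))"
      by auto
    also have "\<dots> \<longleftrightarrow> row P (extend k'' ` E) (extend k'' x) = row P (extend k'' ` E) (extend k'' y)"
      unfolding row_def by (rule restrict_eq_iff[symmetric])
    finally show ?thesis .
  qed
  have "card (rows \<Delta> E S) = card ((\<lambda>s. row P (extend k'' ` E) (extend k'' s)) ` S)"
    unfolding rows_def by (rule card_kernel_eq) (use kern in auto)
  also have "\<dots> = card (rows P (extend k'' ` E) (extend k'' ` S))"
    unfolding rows_def by (simp add: image_image)
  finally show ?thesis unfolding S' E' P_def .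
qed

end
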